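(* Define $\kappa_4(\vec c)=\frac{\sum_j c_j^4}{\left(\sum_j c_j^2\right)^2}$ for nonzero $\vec c\in\mathbb{R}_{\ge0}^N$. For every nonzero $\vec c=(c_1,\dots,c_N)\in\mathbb{R}_{\ge0}^N$ whose entries are not all equal and every real $\alpha>0$, $\kappa_4(c_1+\alpha,\dots,c_N+\alpha)<\kappa_4(\vec c)$. *)

theory Defs
  imports Complex_Main
begin

text \<open>Vectors in R^N are represented as functions nat => real restricted to indices 0..N-1.\<close>

definition kappa4 :: "nat \<Rightarrow> (nat \<Rightarrow> real) \<Rightarrow> real" where
  "kappa4 N c = (\<Sum>j<N. c j ^ 4) / (\<Sum>j<N. c j ^ 2)^2"

end

theory Submission
  imports Defs
begin

lemma pair_sym_nonneg:
  fixes f :: "nat \<Rightarrow> nat \<Rightarrow> real"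
  assumes "\<And>i j. i < N \<Longrightarrow> j < N \<Longrightarrow> f i j + f j i \<ge> 0"
  shows "(\<Sum>i<N. \<Sum>j<N. f i j) \<ge> 0"
proof -
  have sw: "(\<Sum>i<N. \<Sum>j<N. f i j) = (\<Sum>i<N. \<Sum>j<N. f j i)"
    by (rule sum.swap)
  have "2 * (\<Sum>i<N. \<Sum>j<N. f i j) = (\<Sum>i<N. \<Sum>j<N. f i j + f j i)"
    using sw by (simp add: sum.distrib)
  also have "\<dots> \<ge> 0" using assms by (intro sum_nonneg) auto
  finally show ?thesis by simp
qed

theorem theorem13:
  fixes N :: nat and c :: "nat \<Rightarrow> real" and \<alpha> :: real
  assumes nonneg: "\<forall>j<N. c j \<ge> 0"
    and nonzero: "\<exists>j<N. c j \<noteq> 0"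
    and not_all_equal: "\<exists>i<N. \<exists>j<N. c i \<noteq> c j"
    and alpha_pos: "\<alpha> > 0"
  shows "kappa4 N (\<lambda>j. c j + \<alpha>) < kappa4 N c"
proof -
  define S where "S k = (\<Sum>j<N. c j ^ k)" for k
  define n where "n = real N"
  obtain i0 j0 where ij: "i0 < N" "j0 < N" "c i0 \<noteq> c j0" using not_all_equal by blast
  have Npos: "n > 0" using ij n_def by simp
  have S1nn: "S 1 \<ge> 0" unfolding S_def using nonneg by (intro sum_nonneg) auto
  obtain k0 where k0: "k0 < N" "c k0 \<noteq> 0" using nonzero by blast
  have S2pos: "S 2 > 0" unfolding S_def
  proof (rule sum_pos2[of _ k0])
    show "0 < c k0 ^ 2" using k0 by simp
  qed (use k0 in auto)
  have E4: "(\<Sum>j<N. (c j + \<alpha>)^4) = S 4 + 4*\<alpha>*S 3 + 6*\<alpha>^2*S 2 + 4*\<alpha>^3*S 1 + n*\<alpha>^4"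
  proof -
    have "(\<Sum>j<N. (c j + \<alpha>)^4) = (\<Sum>j<N. c j^4 + 4*\<alpha>*c j^3 + 6*\<alpha>^2*c j^2 + 4*\<alpha>^3*c j ^ 1 + \<alpha>^4)"
      by (intro sum.cong refl) (simp add: algebra_simps power2_eq_square power3_eq_cube power4_eq_xxxx)
    thus ?thesis by (simp add: S_def n_def sum.distrib sum_distrib_left)
  qed
  have E2: "(\<Sum>j<N. (c j + \<alpha>)^2) = S 2 + 2*\<alpha>*S 1 + n*\<alpha>^2"
  proof -
    have "(\<Sum>j<N. (c j + \<alpha>)^2) = (\<Sum>j<N. c j^2 + 2*\<alpha>*c j ^ 1 + \<alpha>^2)"
      by (intro sum.cong refl) (simp add: algebra_simps power2_eq_square)
    thus ?thesis by (simp add: S_def n_def sum.distrib sum_distrib_left)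
  qed
  have prod: "S a * S b = (\<Sum>i<N. \<Sum>j<N. c i ^ a * c j ^ b)" for a b
    unfolding S_def by (simp add: sum_product)
  have nS: "n * S a = (\<Sum>i<N. \<Sum>j<N. c j ^ a)" for a
    unfolding S_def n_def by simp
  have A: "n * S 4 - S 2 ^ 2 = (\<Sum>i<N. \<Sum>j<N. c j ^ 4 - c i ^ 2 * c j ^ 2)"
    using prod[of 2 2] nS[of 4] by (simp add: power2_eq_square sum_subtractf)
  have Apos: "n * S 4 - S 2 ^ 2 > 0"
  proof -
    have sw: "(\<Sum>i<N. \<Sum>j<N. c j ^ 4 - c i ^ 2 * c j ^ 2) = (\<Sum>i<N. \<Sum>j<N. c i ^ 4 - c j ^ 2 * c i ^ 2)"
      by (rule sum.swap)
    have "2 * (n * S 4 - S 2 ^ 2) = (\<Sum>i<N. \<Sum>j<N. c j ^ 4 - c i ^ 2 * c j ^ 2) + (\<Sum>i<N. \<Sum>j<N. c i ^ 4 - c j ^ 2 * c i ^ 2)"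
      unfolding A using sw by simp
    also have "\<dots> = (\<Sum>i<N. \<Sum>j<N. (c j ^ 4 - c i ^ 2 * c j ^ 2) + (c i ^ 4 - c j ^ 2 * c i ^ 2))"
      by (simp only: sum.distrib)
    also have "\<dots> = (\<Sum>i<N. \<Sum>j<N. (c i ^ 2 - c j ^ 2)^2)"
      by (intro sum.cong refl) (simp add: algebra_simps power2_eq_square power4_eq_xxxx)
    also have "\<dots> > 0"
    proof (rule sum_pos2[of _ i0])
      have "c i0 ^ 2 \<noteq> c j0 ^ 2"
        using ij nonneg by (metis power2_eq_iff_nonneg)
      hence "(c i0 ^ 2 - c j0 ^ 2)^2 > 0" by simp
      thus "0 < (\<Sum>j<N. (c i0 ^ 2 - c j ^ 2)^2)"
        using ij by (intro sum_pos2[of _ j0]) auto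
      show "\<And>i. i \<in> {..<N} \<Longrightarrow> 0 \<le> (\<Sum>j<N. (c i ^ 2 - c j ^ 2)^2)"
        by (intro sum_nonneg) auto
    qed (use ij in auto)
    finally show ?thesis by simp
  qed
  have B: "S 1 * S 4 - S 2 * S 3 \<ge> 0"
  proof -
    have "S 1 * S 4 - S 2 * S 3 = (\<Sum>i<N. \<Sum>j<N. c i ^ 1 * c j ^ 4 - c i ^ 2 * c j ^ 3)"
      by (simp add: prod sum_subtractf)
    also have "\<dots> \<ge> 0"
    proof (rule pair_sym_nonneg)
      fix i j assume "i < N" "j < N"
      hence "c i \<ge> 0" "c j \<ge> 0" using nonneg by auto
      hence "0 \<le> c i * c j * (c i + c j) * (c i - c j)^2" by simp
      thus "0 \<le> c i ^ 1 * c j ^ 4 - c i ^ 2 * c j ^ 3 + (c j ^ 1 * c i ^ 4 - c j ^ 2 * c i ^ 3)"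
        by (simp add: algebra_simps power2_eq_square power3_eq_cube power4_eq_xxxx)
    qed
    finally show ?thesis .
  qed
  have C: "S 1 * S 3 - S 2 * S 2 \<ge> 0"
  proof -
    have "S 1 * S 3 - S 2 * S 2 = (\<Sum>i<N. \<Sum>j<N. c i ^ 1 * c j ^ 3 - c i ^ 2 * c j ^ 2)"
      by (simp add: prod sum_subtractf)
    also have "\<dots> \<ge> 0"
    proof (rule pair_sym_nonneg)
      fix i j assume "i < N" "j < N"
      hence "c i \<ge> 0" "c j \<ge> 0" using nonneg by auto
      hence "0 \<le> c i * c j * (c i - c j)^2" by simp
      thus "0 \<le> c i ^ 1 * c j ^ 3 - c i ^ 2 * c j ^ 2 + (c j ^ 1 * c i ^ 3 - c j ^ 2 * c i ^ 2)"
        by (simp add: algebra_simps power2_eq_square power3_eq_cube)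
    qed
    finally show ?thesis .
  qed
  have D: "S 1 ^ 2 * S 4 - S 2 ^ 3 \<ge> 0"
  proof -
    have "S 1 * (S 1 * S 4 - S 2 * S 3) \<ge> 0" using B S1nn by simp
    moreover have "S 2 * (S 1 * S 3 - S 2 * S 2) \<ge> 0" using C S2pos by simp
    ultimately have "S 1 * (S 1 * S 4 - S 2 * S 3) + S 2 * (S 1 * S 3 - S 2 * S 2) \<ge> 0" by linarith
    thus ?thesis by (simp add: algebra_simps power2_eq_square power3_eq_cube)
  qed
  define L where "L = S 2 + 2*\<alpha>*S 1 + n*\<alpha>^2"
  have Lpos: "L > 0" unfolding L_def using S2pos S1nn alpha_pos Npos
    by (simp add: add_pos_nonneg)
  have diff: "S 4 * L^2 - (S 4 + 4*\<alpha>*S 3 + 6*\<alpha>^2*S 2 + 4*\<alpha>^3*S 1 + n*\<alpha>^4) * (S 2)^2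
     = \<alpha> * (4 * S 2 * (S 1 * S 4 - S 2 * S 3))
     + \<alpha>^2 * (4 * (S 1 ^ 2 * S 4 - S 2 ^ 3) + 2 * S 2 * (n * S 4 - S 2 ^ 2))
     + \<alpha>^3 * (4 * S 1 * (n * S 4 - S 2 ^ 2))
     + \<alpha>^4 * (n * (n * S 4 - S 2 ^ 2))"
    unfolding L_def by (simp add: algebra_simps power2_eq_square power3_eq_cube power4_eq_xxxx)
  have t1: "\<alpha> * (4 * S 2 * (S 1 * S 4 - S 2 * S 3)) \<ge> 0"
    using alpha_pos S2pos B by simp
  have t2: "\<alpha>^2 * (4 * (S 1 ^ 2 * S 4 - S 2 ^ 3) + 2 * S 2 * (n * S 4 - S 2 ^ 2)) \<ge> 0"
    using D S2pos Apos by simp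
  have t3: "\<alpha>^3 * (4 * S 1 * (n * S 4 - S 2 ^ 2)) \<ge> 0"
    using alpha_pos S1nn Apos by simp
  have t4: "\<alpha>^4 * (n * (n * S 4 - S 2 ^ 2)) > 0"
    using alpha_pos Npos Apos by simp
  have key: "(S 4 + 4*\<alpha>*S 3 + 6*\<alpha>^2*S 2 + 4*\<alpha>^3*S 1 + n*\<alpha>^4) * (S 2)^2 < S 4 * L^2"
    using diff t1 t2 t3 t4 by linarith
  have "kappa4 N (\<lambda>j. c j + \<alpha>) = (S 4 + 4*\<alpha>*S 3 + 6*\<alpha>^2*S 2 + 4*\<alpha>^3*S 1 + n*\<alpha>^4) / L^2"
    unfolding kappa4_def E4 E2 L_def ..
  also have "\<dots> < S 4 / (S 2)^2"
    using key Lpos S2pos by (simp add: divide_less_eq less_divide_eq mult.commute)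
  also have "\<dots> = kappa4 N c" unfolding kappa4_def S_def ..
  finally show ?thesis .
qed

end
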